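(* Let $(\Lambda_t)_{t\ge 0}$ be a family of completely positive trace-preserving (CPTP) maps on single-qubit density matrices with $\Lambda_0=\mathrm{id}$. Suppose that for every $0\le s\le t$ there is a linear map $V_{t,s}$ with $\Lambda_t=V_{t,s}\circ\Lambda_s$ that admits the decomposition $$V_{t,s}[X]=p\,\mathcal{E}_1[X]+(1-p)\,\mathcal{E}_2[X^{T}]$$ for all $2\times 2$ matrices $X$, where $p=p(t,s)\in[0,1]$, $\mathcal{E}_1=\mathcal{E}_1^{(t,s)}$ and $\mathcal{E}_2=\mathcal{E}_2^{(t,s)}$ are CPTP maps on qubits, and $X^T$ is the transpose in a fixed basis. (Such a $V_{t,s}$ may fail to be completely positive, i.e. the evolution may be non-Markovian.) Then for every contractive function $f$ and every pair of single-qubit states $\rho,\sigma$, the function $t\mapsto f(\Lambda_t[\rho],\Lambda_t[\sigma])$ is non-increasing: $f(\Lambda_t[\rho],\Lambda_t[\sigma])\le f(\Lambda_s[\rho],\Lambda_s[\sigma])$ for all $0\le s\le t$; in particular $\frac{\mathrm d}{\mathrm dt}f(\Lambda_t[\rho],\Lambda_t[\sigma])\le 0$ wherever the derivative exists.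
   Context: A function $f(\rho,\sigma)$ of pairs of quantum states (density matrices) is called contractive if $f(\Lambda[\rho],\Lambda[\sigma])\le f(\rho,\sigma)$ for every CPTP map $\Lambda$ and all states $\rho,\sigma$ (examples: trace distance $\tfrac12\|\rho-\sigma\|_1$, infidelity $1-\|\sqrt\rho\sqrt\sigma\|_1$, quantum relative entropy). An evolution $(\Lambda_t)$ is called Markovian (CP-divisible) if for every $0\le s\le t$ there exists a CPTP map $V_{t,s}$ with $\Lambda_t=V_{t,s}\circ\Lambda_s$, and non-Markovian otherwise. *)

theory Defs
  imports "HOL-Analysis.Analysis"
begin

type_synonym qmat = "complex ^ 2 ^ 2"

definition qscale :: "complex \<Rightarrow> qmat \<Rightarrow> qmat" where
  "qscale c A = (\<chi> i j. c * A $ i $ j)"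

definition qtrace :: "qmat \<Rightarrow> complex" where
  "qtrace A = (\<Sum>i\<in>UNIV. A $ i $ i)"

definition qpsd :: "qmat \<Rightarrow> bool" where
  "qpsd A \<longleftrightarrow> (\<forall>v :: complex ^ 2.
     (let q = (\<Sum>k\<in>UNIV. cnj (v $ k) * ((A *v v) $ k)) in Im q = 0 \<and> Re q \<ge> 0))"

definition density :: "qmat \<Rightarrow> bool" where
  "density \<rho> \<longleftrightarrow> qpsd \<rho> \<and> qtrace \<rho> = 1"

definition qlinear :: "(qmat \<Rightarrow> qmat) \<Rightarrow> bool" where
  "qlinear \<Lambda> \<longleftrightarrow> (\<forall>A B. \<Lambda> (A + B) = \<Lambda> A + \<Lambda> B) \<and> (\<forall>c A. \<Lambda> (qscale c A) = qscale c (\<Lambda> A))"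

definition trace_preserving :: "(qmat \<Rightarrow> qmat) \<Rightarrow> bool" where
  "trace_preserving \<Lambda> \<longleftrightarrow> (\<forall>A. qtrace (\<Lambda> A) = qtrace A)"

text \<open>An operator on C^n \<otimes> C^2, written as an n x n block matrix of 2x2 blocks M i j (i,j<n),
  is positive semidefinite.\<close>
definition block_psd :: "nat \<Rightarrow> (nat \<Rightarrow> nat \<Rightarrow> qmat) \<Rightarrow> bool" where
  "block_psd n M \<longleftrightarrow> (\<forall>w :: nat \<Rightarrow> complex ^ 2.
     (let q = (\<Sum>i<n. \<Sum>j<n. \<Sum>k\<in>UNIV. cnj (w i $ k) * ((M i j *v w j) $ k))
      in Im q = 0 \<and> Re q \<ge> 0))"

text \<open>Complete positivity: id_n \<otimes> \<Lambda> is positive for every ancilla dimension n.\<close>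
definition completely_positive :: "(qmat \<Rightarrow> qmat) \<Rightarrow> bool" where
  "completely_positive \<Lambda> \<longleftrightarrow>
     (\<forall>(n::nat) M. block_psd n M \<longrightarrow> block_psd n (\<lambda>i j. \<Lambda> (M i j)))"

definition CPTP :: "(qmat \<Rightarrow> qmat) \<Rightarrow> bool" where
  "CPTP \<Lambda> \<longleftrightarrow> qlinear \<Lambda> \<and> completely_positive \<Lambda> \<and> trace_preserving \<Lambda>"

definition contractive :: "(qmat \<Rightarrow> qmat \<Rightarrow> real) \<Rightarrow> bool" where
  "contractive f \<longleftrightarrow> (\<forall>\<Lambda> \<rho> \<sigma>. CPTP \<Lambda> \<longrightarrow> density \<rho> \<longrightarrow> density \<sigma> \<longrightarrow>
      f (\<Lambda> \<rho>) (\<Lambda> \<sigma>) \<le> f \<rho> \<sigma>)"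

end

theory Submission
  imports Defs
begin

definition adj :: "qmat \<Rightarrow> qmat" where "adj A = (\<chi> i j. cnj (A$j$i))"

lemma quad_ad:
  fixes A M :: qmat
  shows "(\<Sum>k\<in>UNIV. cnj (w $ k) * ((A ** M ** adj A) *v u) $ k)
       = (\<Sum>k\<in>UNIV. cnj ((adj A *v w) $ k) * ((M *v (adj A *v u)) $ k))"
  by (simp add: sum_2 matrix_matrix_mult_def matrix_vector_mult_def adj_def algebra_simps)

lemma block_psd_ad:
  assumes "block_psd n M"
  shows "block_psd n (\<lambda>i j. A ** M i j ** adj A)"
  unfolding block_psd_def
proof
  fix w :: "nat \<Rightarrow> complex^2"
  have "(\<Sum>i<n. \<Sum>j<n. \<Sum>k\<in>UNIV. cnj (w i $ k) * ((A ** M i j ** adj A) *v w j) $ k)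
     = (\<Sum>i<n. \<Sum>j<n. \<Sum>k\<in>UNIV. cnj ((\<lambda>i. adj A *v w i) i $ k) * ((M i j *v (\<lambda>i. adj A *v w i) j) $ k))"
    by (simp add: quad_ad)
  with assms show "let q = (\<Sum>i<n. \<Sum>j<n. \<Sum>k\<in>UNIV. cnj (w i $ k) * ((A ** M i j ** adj A) *v w j) $ k)
      in Im q = 0 \<and> 0 \<le> Re q"
    unfolding block_psd_def by metis
qed

lemma block_psd_comb:
  assumes "block_psd n M1" "block_psd n M2" "0 \<le> p" "0 \<le> q"
  shows "block_psd n (\<lambda>i j. p *\<^sub>R M1 i j + q *\<^sub>R M2 i j)"
  unfolding block_psd_def Let_def
proof
  fix w :: "nat \<Rightarrow> complex^2"
  define Q where "Q M = (\<Sum>i<n. \<Sum>j<n. \<Sum>k\<in>UNIV. cnj (w i $ k) * ((M i j *v w j) $ k))" for M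
  have e: "(\<Sum>k\<in>UNIV. cnj (w i $ k) * (((p *\<^sub>R M1 i j + q *\<^sub>R M2 i j) *v w j) $ k))
     = of_real p * (\<Sum>k\<in>UNIV. cnj (w i $ k) * ((M1 i j *v w j) $ k)) + of_real q * (\<Sum>k\<in>UNIV. cnj (w i $ k) * ((M2 i j *v w j) $ k))" for i j
    apply (simp add: sum_2 matrix_vector_mult_def)
    by (simp add: scaleR_conv_of_real algebra_simps)
  have "Q (\<lambda>i j. p *\<^sub>R M1 i j + q *\<^sub>R M2 i j) = of_real p * Q M1 + of_real q * Q M2"
    unfolding Q_def e by (simp add: sum.distrib sum_distrib_left)
  moreover have "Im (Q M1) = 0 \<and> 0 \<le> Re (Q M1)" "Im (Q M2) = 0 \<and> 0 \<le> Re (Q M2)"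
    using assms(1,2) unfolding block_psd_def Let_def Q_def by blast+
  ultimately show "Im (Q (\<lambda>i j. p *\<^sub>R M1 i j + q *\<^sub>R M2 i j)) = 0 \<and> 0 \<le> Re (Q (\<lambda>i j. p *\<^sub>R M1 i j + q *\<^sub>R M2 i j))"
    using assms(3,4) by simp
qed

lemma qpsd_block1: "qpsd A \<Longrightarrow> block_psd 1 (\<lambda>i j. A)"
  unfolding qpsd_def block_psd_def by simp

lemma block1_qpsd: "block_psd 1 (\<lambda>i j. A) \<Longrightarrow> qpsd A"
  unfolding qpsd_def block_psd_def
proof
  fix v :: "complex^2"
  assume "\<forall>w::nat\<Rightarrow>complex^2. let q = \<Sum>i<1. \<Sum>j<1. \<Sum>k\<in>UNIV. cnj (w i $ k) * (A *v w j) $ k in Im q = 0 \<and> 0 \<le> Re q"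
  from spec[OF this, of "\<lambda>_. v"] show "let q = \<Sum>k\<in>UNIV. cnj (v $ k) * (A *v v) $ k in Im q = 0 \<and> 0 \<le> Re q" by simp
qed

lemma density_map:
  assumes "CPTP L" "density r" shows "density (L r)"
proof -
  have "block_psd 1 (\<lambda>i j. L r)"
    using assms qpsd_block1[of r] unfolding CPTP_def completely_positive_def density_def by fastforce
  then show ?thesis using assms block1_qpsd unfolding CPTP_def trace_preserving_def density_def by auto
qed

lemma qpsd_herm:
  assumes "qpsd A"
  shows "Im (A$1$1) = 0" "Im (A$2$2) = 0" "A$2$1 = cnj (A$1$2)"
proof -
  have q: "Im (\<Sum>k\<in>UNIV. cnj (v $ k) * ((A *v v) $ k)) = 0" for v
    using assms unfolding qpsd_def Let_def by blast
  from q[of "vector [1,0]"] show "Im (A$1$1) = 0" by (simp add: sum_2 matrix_vector_mult_def)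
  from q[of "vector [0,1]"] show "Im (A$2$2) = 0" by (simp add: sum_2 matrix_vector_mult_def)
  have a: "Im (A$1$1) = 0" "Im (A$2$2) = 0" by fact+
  from q[of "vector [1,1]"] a have "Im (A$1$2) + Im (A$2$1) = 0" by (simp add: sum_2 matrix_vector_mult_def)
  moreover from q[of "vector [1,\<i>]"] a have "Re (A$1$2) - Re (A$2$1) = 0" by (simp add: sum_2 matrix_vector_mult_def)
  ultimately show "A$2$1 = cnj (A$1$2)" by (simp add: complex_eq_iff)
qed

definition Umat :: "real \<Rightarrow> complex \<Rightarrow> qmat" where
 "Umat c z = vector [vector [-\<i>*z, \<i> * complex_of_real c], vector [\<i> * complex_of_real c, \<i>*cnj z]]"

definition orth :: "real \<Rightarrow> complex \<Rightarrow> qmat \<Rightarrow> bool" where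
 "orth c z r \<longleftrightarrow> 2 * Re (z * r$1$2) + c * Re (r$1$1 - r$2$2) = 0"

lemma Umat_transpose:
  fixes r :: qmat
  assumes h1: "Im (r$1$1) = 0" and h2: "Im (r$2$2) = 0" and h3: "r$2$1 = cnj (r$1$2)"
    and n: "c^2 + (Re z)^2 + (Im z)^2 = 1"
    and o: "orth c z r"
  shows "Umat c z ** r ** adj (Umat c z) = transpose r"
proof -
  obtain a b d where ab: "r$1$1 = a" "r$1$2 = b" "r$2$2 = d" by blast
  show ?thesis
    using assms unfolding ab orth_def
    apply (simp add: vec_eq_iff forall_2 matrix_matrix_mult_def sum_2 Umat_def adj_def transpose_def complex_eq_iff ab)
    apply (simp add: algebra_simps)
    apply (intro conjI; algebra)
    done
qed

lemma Umat_trace: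
  assumes n: "c^2 + (Re z)^2 + (Im z)^2 = 1"
  shows "qtrace (Umat c z ** X ** adj (Umat c z)) = qtrace X"
  using n
  apply (simp add: qtrace_def matrix_matrix_mult_def sum_2 Umat_def adj_def complex_eq_iff)
  apply (simp add: algebra_simps)
  apply (intro conjI; algebra)
  done

lemma exists_cz:
  "\<exists>c z. c^2 + (Re z)^2 + (Im z)^2 = 1 \<and> orth c z r1 \<and> orth c z r2"
proof -
  define al where "al r = (vector [2 * Re (r$1$2), - 2 * Im (r$1$2), Re (r$1$1 - r$2$2)] :: real^3)" for r :: qmat
  have "dim {al r1, al r2} \<le> card {al r1, al r2}"
    by (rule dim_le_card) (auto intro: span_base)
  also have "\<dots> \<le> 2" by (simp add: card_insert_le_m1)
  finally have "dim {al r1, al r2} < DIM(real^3)" by simp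
  then obtain n :: "real^3" where n0: "n \<noteq> 0" and no: "\<And>y. y \<in> span {al r1, al r2} \<Longrightarrow> orthogonal n y"
    using orthogonal_to_subspace_exists by blast
  have o1: "n \<bullet> al r1 = 0" "n \<bullet> al r2 = 0"
    using no[of "al r1"] no[of "al r2"] by (auto simp: orthogonal_def span_base)
  define s where "s = sqrt (n$1^2 + n$2^2 + n$3^2)"
  have nn: "n \<bullet> n = n$1^2 + n$2^2 + n$3^2" by (simp add: inner_vec_def sum_3 power2_eq_square)
  have pos: "0 < n$1^2 + n$2^2 + n$3^2" using n0 nn by (metis inner_gt_zero_iff)
  hence sp: "0 < s" "s^2 = n$1^2 + n$2^2 + n$3^2" unfolding s_def by auto
  define c where "c = n$3 / s"
  define z where "z = Complex (n$1/s) (n$2/s)"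
  have "c^2 + (Re z)^2 + (Im z)^2 = 1"
  proof -
    have "c^2 + (Re z)^2 + (Im z)^2 = (n$1^2 + n$2^2 + n$3^2) / s^2"
      unfolding c_def z_def by (simp add: power_divide add_divide_distrib)
    thus ?thesis using sp pos by simp
  qed
  moreover have "orth c z r" if "n \<bullet> al r = 0" for r
  proof -
    have "n$1 * (2 * Re (r$1$2)) + n$2 * (- 2 * Im (r$1$2)) + n$3 * Re (r$1$1 - r$2$2) = 0"
      using that by (simp add: al_def inner_vec_def sum_3)
    hence "(2 * Re (z * r$1$2) + c * Re (r$1$1 - r$2$2)) * s = 0"
      using sp unfolding c_def z_def by (simp add: field_simps) (metis distrib_left)
    thus ?thesis using sp unfolding orth_def by simp
  qed
  ultimately show ?thesis using o1 by blast
qed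

lemma qtrace_comb: "qtrace (p *\<^sub>R A + q *\<^sub>R B) = of_real p * qtrace A + of_real q * qtrace B"
  apply (simp add: qtrace_def sum_2)
  by (simp add: scaleR_conv_of_real algebra_simps)

lemma matrix_add_rdistrib': "((A::qmat) + B) ** C = A ** C + B ** C"
  by (simp add: vec_eq_iff matrix_matrix_mult_def sum.distrib distrib_right)

lemma qscale_comb: "qscale c (p *\<^sub>R A + q *\<^sub>R B) = p *\<^sub>R qscale c A + q *\<^sub>R qscale c B"
  by (simp add: qscale_def vec_eq_iff scaleR_conv_of_real algebra_simps)

lemma qscale_ad: "U ** qscale c X ** V = qscale c (U ** X ** V)"
  by (simp add: qscale_def vec_eq_iff forall_2 matrix_matrix_mult_def sum_2 algebra_simps)

lemma CPTP_Phi: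
  assumes "CPTP E1" "CPTP E2" "0 \<le> p" "p \<le> 1" "c^2 + (Re z)^2 + (Im z)^2 = 1"
  shows "CPTP (\<lambda>X. p *\<^sub>R E1 X + (1 - p) *\<^sub>R E2 (Umat c z ** X ** adj (Umat c z)))"
proof -
  let ?U = "Umat c z"
  have l1: "qlinear E1" "qlinear E2" and cp: "completely_positive E1" "completely_positive E2"
    and tp: "trace_preserving E1" "trace_preserving E2" using assms(1,2) unfolding CPTP_def by auto
  have "qlinear (\<lambda>X. p *\<^sub>R E1 X + (1 - p) *\<^sub>R E2 (?U ** X ** adj ?U))"
    using l1 unfolding qlinear_def
    by (simp add: matrix_add_ldistrib matrix_add_rdistrib' qscale_ad qscale_comb scaleR_add_right)
  moreover have "completely_positive (\<lambda>X. p *\<^sub>R E1 X + (1 - p) *\<^sub>R E2 (?U ** X ** adj ?U))"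
    unfolding completely_positive_def
  proof (intro allI impI)
    fix n M assume M: "block_psd n M"
    have a: "block_psd n (\<lambda>i j. E1 (M i j))" using cp(1) M unfolding completely_positive_def by blast
    have b: "block_psd n (\<lambda>i j. E2 (?U ** M i j ** adj ?U))"
      using cp(2) block_psd_ad[OF M, of ?U] unfolding completely_positive_def by blast
    show "block_psd n (\<lambda>i j. p *\<^sub>R E1 (M i j) + (1 - p) *\<^sub>R E2 (?U ** M i j ** adj ?U))"
      using block_psd_comb[OF a b] assms(3,4) by simp
  qed
  moreover have "trace_preserving (\<lambda>X. p *\<^sub>R E1 X + (1 - p) *\<^sub>R E2 (?U ** X ** adj ?U))"
    using tp Umat_trace[OF assms(5)] unfolding trace_preserving_def
    apply (simp add: qtrace_comb)
    by (simp add: algebra_simps)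
  ultimately show ?thesis unfolding CPTP_def by blast
qed

theorem theorem1:
  fixes \<Lambda> :: "real \<Rightarrow> qmat \<Rightarrow> qmat"
    and f :: "qmat \<Rightarrow> qmat \<Rightarrow> real"
    and \<rho> \<sigma> :: qmat
  assumes cptp: "\<forall>t\<ge>0. CPTP (\<Lambda> t)"
    and init: "\<Lambda> 0 = id"
    and decomp: "\<forall>s t. 0 \<le> s \<longrightarrow> s \<le> t \<longrightarrow>
        (\<exists>V p E1 E2. qlinear V \<and> \<Lambda> t = V \<circ> \<Lambda> s \<and> 0 \<le> p \<and> p \<le> 1 \<and>
           CPTP E1 \<and> CPTP E2 \<and>
           (\<forall>X. V X = p *\<^sub>R E1 X + (1 - p) *\<^sub>R E2 (transpose X)))"
    and contr: "contractive f"
    and rho: "density \<rho>" and sigma: "density \<sigma>"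
  shows "(\<forall>s t. 0 \<le> s \<longrightarrow> s \<le> t \<longrightarrow>
            f (\<Lambda> t \<rho>) (\<Lambda> t \<sigma>) \<le> f (\<Lambda> s \<rho>) (\<Lambda> s \<sigma>)) \<and>
         (\<forall>t D. 0 < t \<longrightarrow>
            ((\<lambda>u. f (\<Lambda> u \<rho>) (\<Lambda> u \<sigma>)) has_real_derivative D) (at t) \<longrightarrow> D \<le> 0)"
proof -
  have mono: "f (\<Lambda> t \<rho>) (\<Lambda> t \<sigma>) \<le> f (\<Lambda> s \<rho>) (\<Lambda> s \<sigma>)" if st: "0 \<le> s" "s \<le> t" for s t
  proof -
    obtain V p E1 E2 where V: "\<Lambda> t = V \<circ> \<Lambda> s" "0 \<le> p" "p \<le> 1" "CPTP E1" "CPTP E2"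
      "\<And>X. V X = p *\<^sub>R E1 X + (1 - p) *\<^sub>R E2 (transpose X)"
      using decomp st by blast
    define r where "r = \<Lambda> s \<rho>"
    define q where "q = \<Lambda> s \<sigma>"
    have dr: "density r" and dq: "density q"
      using density_map cptp st rho sigma unfolding r_def q_def by auto
    obtain c z where cz: "c^2 + (Re z)^2 + (Im z)^2 = 1" "orth c z r" "orth c z q"
      using exists_cz by blast
    define Phi where "Phi X = p *\<^sub>R E1 X + (1 - p) *\<^sub>R E2 (Umat c z ** X ** adj (Umat c z))" for X
    have cP: "CPTP Phi" unfolding Phi_def using CPTP_Phi V cz by blast
    have hr: "Im (r$1$1) = 0" "Im (r$2$2) = 0" "r$2$1 = cnj (r$1$2)"
      using qpsd_herm dr unfolding density_def by auto
    have hq: "Im (q$1$1) = 0" "Im (q$2$2) = 0" "q$2$1 = cnj (q$1$2)"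
      using qpsd_herm dq unfolding density_def by auto
    have e1: "\<Lambda> t \<rho> = Phi r"
      using V(1) V(6) Umat_transpose[OF hr cz(1) cz(2)] unfolding Phi_def r_def by simp
    have e2: "\<Lambda> t \<sigma> = Phi q"
      using V(1) V(6) Umat_transpose[OF hq cz(1) cz(3)] unfolding Phi_def q_def by simp
    show ?thesis using contr cP dr dq unfolding e1 e2 contractive_def r_def q_def by blast
  qed
  moreover have "D \<le> 0" if t: "0 < t" and der: "((\<lambda>u. f (\<Lambda> u \<rho>) (\<Lambda> u \<sigma>)) has_real_derivative D) (at t)" for t D
  proof (rule ccontr)
    assume "\<not> D \<le> 0"
    then obtain d where d: "d > 0" "\<forall>h>0. h < d \<longrightarrow> f (\<Lambda> t \<rho>) (\<Lambda> t \<sigma>) < f (\<Lambda> (t+h) \<rho>) (\<Lambda> (t+h) \<sigma>)"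
      using DERIV_pos_inc_right[OF der] by auto
    hence "f (\<Lambda> t \<rho>) (\<Lambda> t \<sigma>) < f (\<Lambda> (t+d/2) \<rho>) (\<Lambda> (t+d/2) \<sigma>)" by simp
    moreover have "f (\<Lambda> (t+d/2) \<rho>) (\<Lambda> (t+d/2) \<sigma>) \<le> f (\<Lambda> t \<rho>) (\<Lambda> t \<sigma>)"
      using mono[of t "t + d/2"] t d by simp
    ultimately show False by simp
  qed
  ultimately show ?thesis by blast
qed

end
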